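(* Let $m,n\in\mathbb{N}$ with $m\ge 1$. If $m$ and $n$ are both even, $m\mid 3n$, and $4\nmid n$, then the friendship graph $F_n$ is not $\mathbb{Z}_m$-cordial.
   Context: Graphs are finite, simple and undirected. For $n\in\mathbb{N}$, the friendship graph $F_n$ is the union of $n$ copies of the triangle $C_3$ joined at a single common (central) vertex. For an abelian group $A$ and a graph $G=(V,E)$, a vertex labeling $\ell:V\to A$ induces an edge labeling $\ell(\{v_1,v_2\})=\ell(v_1)+\ell(v_2)$. Let $f_V(a)=|\{v\in V:\ell(v)=a\}|$ and $f_E(a)=|\{e\in E:\ell(e)=a\}|$. The labeling is $A$-cordial if $|f_V(a_1)-f_V(a_2)|\le 1$ and $|f_E(a_1)-f_E(a_2)|\le 1$ for all $a_1,a_2\in A$; $G$ is $A$-cordial if it admits an $A$-cordial labeling. *)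

theory Defs
  imports Main
begin

text \<open>A finite simple graph is given by a vertex set V and an edge set E of
  2-element subsets of V. The cyclic group Z_m is represented by the residues
  {0..<m} with addition modulo m.\<close>

definition simple_graph :: "'a set \<Rightarrow> 'a set set \<Rightarrow> bool" where
  "simple_graph V E \<longleftrightarrow> finite V \<and> (\<forall>e\<in>E. e \<subseteq> V \<and> card e = 2)"

definition friendship_V :: "nat \<Rightarrow> nat set" where
  "friendship_V n = {0..2*n}"

definition friendship_E :: "nat \<Rightarrow> nat set set" where
  "friendship_E n = (\<Union>i\<in>{1..n}. {{0, 2*i - 1}, {0, 2*i}, {2*i - 1, 2*i}})"

definition vcount :: "'a set \<Rightarrow> ('a \<Rightarrow> nat) \<Rightarrow> nat \<Rightarrow> nat" where
  "vcount V l a = card {v\<in>V. l v = a}"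

definition ecount :: "nat \<Rightarrow> 'a set set \<Rightarrow> ('a \<Rightarrow> nat) \<Rightarrow> nat \<Rightarrow> nat" where
  "ecount m E l a = card {e\<in>E. \<exists>u v. e = {u, v} \<and> u \<noteq> v \<and> (l u + l v) mod m = a}"

definition Zm_cordial_labeling :: "nat \<Rightarrow> 'a set \<Rightarrow> 'a set set \<Rightarrow> ('a \<Rightarrow> nat) \<Rightarrow> bool" where
  "Zm_cordial_labeling m V E l \<longleftrightarrow>
     (\<forall>v\<in>V. l v < m) \<and>
     (\<forall>a1<m. \<forall>a2<m. vcount V l a1 \<le> vcount V l a2 + 1 \<and>
                      ecount m E l a1 \<le> ecount m E l a2 + 1)"

definition Zm_cordial :: "nat \<Rightarrow> 'a set \<Rightarrow> 'a set set \<Rightarrow> bool" where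
  "Zm_cordial m V E \<longleftrightarrow> (\<exists>l. Zm_cordial_labeling m V E l)"

end

theory Submission
  imports Defs
begin

lemma pair_label:
  assumes "x \<noteq> y"
  shows "(\<exists>u v. {x,y} = {u,v} \<and> u \<noteq> v \<and> (l u + l v) mod m = a) \<longleftrightarrow> (l x + l y) mod m = (a::nat)"
  using assms by (auto simp: doubleton_eq_iff add.commute)

lemma sum_E:
  "(\<Sum>e\<in>friendship_E n. h e) = (\<Sum>i\<in>{1..n}. h {0,2*i-1} + h {0,2*i} + h {2*i-1,2*i})"
proof -
  have "(\<Sum>e\<in>friendship_E n. h e) = (\<Sum>i\<in>{1..n}. \<Sum>e\<in>{{0, 2*i - 1}, {0, 2*i}, {2*i - 1, 2*i}}. h e)"
    unfolding friendship_E_def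
  proof (rule sum.UNION_disjoint)
    show "\<forall>i\<in>{1..n}. \<forall>j\<in>{1..n}. i \<noteq> j \<longrightarrow>
      {{0::nat, 2*i - 1}, {0, 2*i}, {2*i - 1, 2*i}} \<inter> {{0, 2*j - 1}, {0, 2*j}, {2*j - 1, 2*j}} = {}"
      by (auto simp: doubleton_eq_iff)
  qed auto
  also have "\<dots> = (\<Sum>i\<in>{1..n}. h {0,2*i-1} + h {0,2*i} + h {2*i-1,2*i})"
  proof (rule sum.cong)
    fix i assume "i \<in> {1..n}"
    then have "{0::nat, 2*i - 1} \<noteq> {0, 2*i}" "{0::nat, 2*i - 1} \<noteq> {2*i-1, 2*i}" "{0::nat, 2*i} \<noteq> {2*i-1, 2*i}"
      by (auto simp: doubleton_eq_iff)
    then show "(\<Sum>e\<in>{{0, 2*i - 1}, {0, 2*i}, {2*i - 1, 2*i}}. h e) = h {0,2*i-1} + h {0,2*i} + h {2*i-1,2*i}"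
      by (simp add: add.assoc)
  qed simp
  finally show ?thesis .
qed

lemma card_odd: "card {a. a < 2*t \<and> odd (a::nat)} = t"
proof (induction t)
  case 0 then show ?case by simp
next
  case (Suc t)
  have "{a. a < 2*Suc t \<and> odd (a::nat)} = insert (2*t+1) {a. a < 2*t \<and> odd a}"
    by (auto, presburger+)
  then show ?case using Suc by simp
qed

theorem theorem7p1:
  fixes m n :: nat
  assumes "m \<ge> 1" and "even m" and "even n" and "m dvd 3 * n" and "\<not> 4 dvd n"
  shows "\<not> Zm_cordial m (friendship_V n) (friendship_E n)"
proof
  assume "Zm_cordial m (friendship_V n) (friendship_E n)"
  then obtain l where cord: "Zm_cordial_labeling m (friendship_V n) (friendship_E n) l"
    unfolding Zm_cordial_def by blast
  define E where "E = friendship_E n"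
  define P where "P = (\<lambda>e a. \<exists>u v. e = {u, v} \<and> u \<noteq> v \<and> (l u + l v) mod m = a)"
  define ec where "ec = ecount m E l"
  have finE: "finite E" unfolding E_def friendship_E_def by auto
  have ec_sum: "ec a = (\<Sum>e\<in>E. if P e a then 1 else 0)" for a
    unfolding ec_def ecount_def P_def using finE by (simp add: sum.inter_filter[symmetric])
  have bal: "ec a1 \<le> ec a2 + 1" if "a1 < m" "a2 < m" for a1 a2
    using cord that unfolding Zm_cordial_labeling_def ec_def E_def by blast
  have m0: "m > 0" using assms by simp
  have mod_odd: "odd (s mod m) \<longleftrightarrow> odd s" for s
    using assms(2) by (metis dvd_mod_iff)
  have tot: "(\<Sum>a<m. ec a) = 3*n"
  proof -
    have "(\<Sum>a<m. ec a) = (\<Sum>e\<in>E. \<Sum>a<m. if P e a then 1 else 0)"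
      unfolding ec_sum by (rule sum.swap)
    also have "\<dots> = (\<Sum>i\<in>{1..n}. 3)"
      unfolding E_def sum_E
    proof (rule sum.cong)
      fix i assume i: "i \<in> {1..n}"
      then have ne: "2*i-1 \<noteq> 2*i" by auto
      have one: "(\<Sum>a<m. if P {x,y} a then 1 else 0) = (1::nat)" if "x \<noteq> y" for x y
        using that m0 unfolding P_def pair_label[OF that] by simp
      show "(\<Sum>a<m. if P {0, 2 * i - 1} a then 1 else 0) + (\<Sum>a<m. if P {0, 2 * i} a then 1 else 0) +
         (\<Sum>a<m. if P {2 * i - 1, 2 * i} a then 1 else 0) = (3::nat)"
        using i one[of 0 "2*i-1"] one[of "2*i-1" "2*i", OF ne] one[of 0 "2*i"] one[of "2*i-1" "2*i"] by (simp del: One_nat_def)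
    qed simp
    finally show ?thesis by simp
  qed
  have oddev: "even (\<Sum>a\<in>{a. a < m \<and> odd a}. ec a)"
  proof -
    have fo: "finite {a. a < m \<and> odd a}" by simp
    have "(\<Sum>a\<in>{a. a < m \<and> odd a}. ec a) = (\<Sum>e\<in>E. \<Sum>a\<in>{a. a < m \<and> odd a}. if P e a then 1 else 0)"
      unfolding ec_sum by (rule sum.swap)
    also have "\<dots> = (\<Sum>i\<in>{1..n}. (if odd (l 0 + l (2*i-1)) then 1 else 0) + (if odd (l 0 + l (2*i)) then 1 else 0)
         + (if odd (l (2*i-1) + l (2*i)) then 1 else 0))"
      unfolding E_def sum_E
    proof (rule sum.cong)
      fix i assume i: "i \<in> {1..n}"
      then have ne: "2*i-1 \<noteq> 2*i" by auto
      have one: "(\<Sum>a\<in>{a. a < m \<and> odd a}. if P {x,y} a then 1 else 0) = (if odd (l x + l y) then 1 else (0::nat))" if "x \<noteq> y" for x y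
      proof -
        have "(\<Sum>a\<in>{a. a < m \<and> odd a}. if P {x,y} a then 1 else 0) = (\<Sum>a\<in>{a. a < m \<and> odd a}. if (l x + l y) mod m = a then 1 else (0::nat))"
          unfolding P_def pair_label[OF that] by simp
        also have "\<dots> = (if odd (l x + l y) then 1 else 0)"
          using m0 mod_odd by (simp add: sum.delta'[OF fo])
        finally show ?thesis .
      qed
      show "(\<Sum>a\<in>{a. a < m \<and> odd a}. if P {0, 2 * i - 1} a then 1 else 0) + (\<Sum>a\<in>{a. a < m \<and> odd a}. if P {0, 2 * i} a then 1 else 0) +
         (\<Sum>a\<in>{a. a < m \<and> odd a}. if P {2 * i - 1, 2 * i} a then 1 else 0) =
         (if odd (l 0 + l (2*i-1)) then 1 else 0) + (if odd (l 0 + l (2*i)) then 1 else 0)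
         + (if odd (l (2*i-1) + l (2*i)) then 1 else (0::nat))"
        using i one[of 0 "2*i-1"] one[of "2*i-1" "2*i", OF ne] one[of 0 "2*i"] one[of "2*i-1" "2*i"] by (simp del: One_nat_def)
    qed simp
    also have "even \<dots>"
      by (rule dvd_sum) auto
    finally show ?thesis .
  qed
  obtain a0 where a0: "a0 < m" "\<forall>a<m. ec a0 \<le> ec a"
  proof -
    have "finite (ec ` {..<m})" "ec ` {..<m} \<noteq> {}" using m0 by auto
    then have "Min (ec ` {..<m}) \<in> ec ` {..<m}" by (rule Min_in)
    then obtain a0 where "a0 < m" "ec a0 = Min (ec ` {..<m})" by auto
    moreover have "\<forall>a<m. Min (ec ` {..<m}) \<le> ec a" by simp
    ultimately show ?thesis using that by metis
  qed
  define c where "c = ec a0"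
  define d where "d = (\<lambda>a. ec a - c)"
  have d1: "d a \<le> 1" "ec a = c + d a" if "a < m" for a
    using bal[OF that a0(1)] a0 that unfolding d_def c_def by auto
  have "(\<Sum>a<m. ec a) = m*c + (\<Sum>a<m. d a)"
    using d1 by (simp add: sum.distrib)
  moreover have "(\<Sum>a<m. d a) < m"
  proof -
    have "(\<Sum>a<m. d a) = (\<Sum>a\<in>{..<m}-{a0}. d a)"
      using a0(1) by (simp add: sum.remove d_def c_def)
    also have "\<dots> \<le> (\<Sum>a\<in>{..<m}-{a0}. 1)"
      by (rule sum_mono) (use d1 in auto)
    also have "\<dots> < m" using a0(1) by simp
    finally show ?thesis .
  qed
  ultimately have "(\<Sum>a<m. d a) = 0"
    using tot assms(4) by (metis add_0_right dvd_add_right_iff dvd_imp_le dvd_triv_left neq0_conv not_le)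
  then have allc: "ec a = c" if "a < m" for a
    using d1 that by simp
  obtain t where t: "m = 2*t" using assms(2) by blast
  have "(\<Sum>a\<in>{a. a < m \<and> odd a}. ec a) = t*c"
    using allc card_odd[of t] t by simp
  moreover have "m*c = 3*n" using tot allc by simp
  ultimately have "even (t*c)" "2*(t*c) = 3*n" using oddev t by auto
  then show False using assms(3,5) by presburger
qed

end
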